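(* Fix $L\in\mathbb Z$ and work on $Y_L=\mathbb R\times(0,2^L]\times\mathbb R$ with the objects described in the context. The quadruple $(Y_L,\mu,\nu,\mathcal C)$, where $\mathcal C(A)=\mathcal M(\mathcal N(\mathcal Q(A)))$ and $\mathcal E=\mathcal D_L$, satisfies the crop condition for every choice of parameters $\Phi\ge2$, $K\ge1$.
   Context: Dyadic intervals $I(m,l)=(2^lm,2^l(m+1)]$; tiles $H(m,l,n)=I(m,l)\times(2^{l-1},2^l]\times I(n,-l)$. $\mathcal D_L$ = strips $D(m,l)=I(m,l)\times(0,2^l]\times\mathbb R$ with $l\le L$, $\sigma(D(m,l))=2^l$. $\mathcal T_L$ = trees $T(m,l,n)=\bigcup_{l'\le l}\bigcup_{m':\,I(m',l')\subseteq I(m,l)}H(m',l',N(n,l'))$ with $l\le L$ ($N(n,l')$ the integer with $I(n,-l)\subseteq I(N(n,l'),-l')$), $\tau(T(m,l,n))=2^l$. Outer measures on $Y_L$: $\mu(A)=\inf\{\sum_{S\in\mathcal S'}\sigma(S):\mathcal S'\subseteq\mathcal D_L,A\subseteq\bigcup\mathcal S'\}$, $\nu$ likewise from $(\mathcal T_L,\tau)$. $\pi$ = projection onto first coordinate, $|\cdot|$ Lebesgue measure. For $E\in\mathcal D_L$, $E_+=\{(x,s,\xi)\in E:s>\sigma(E)/2\}$. $\mathcal Q(A)=\{E\in\mathcal D_L:E_+\cap A\ne\varnothing\}$. For $\mathcal D_1\subseteq\mathcal D_L$: $\mathcal N(\mathcal D_1)=\{E\in\mathcal D_L:|\pi(E)\cap\pi(\bigcup\mathcal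 D_1)|\ge|\pi(E)|/2\}$; $\mathcal M(\mathcal D_1)$ = elements of $\mathcal D_1$ maximal under inclusion. $\mathbf B_{\mathcal C}(A)=\bigcup_{E\in\mathcal C(A)}E$. A $\mu$-covering function with parameter $\Phi$: a map $\mathcal C$ assigning to each $A$ a subcollection of pairwise disjoint elements of $\mathcal E$ with $A\subseteq\mathbf B_{\mathcal C}(A)$, $\mu(\mathbf B_{\mathcal C}(A))\le\Phi\mu(A)$, $\mathbf B_{\mathcal C}$ monotone. A collection $\mathcal A$ of pairwise disjoint sets is $\nu$-Carathéodory (parameter $K$) if $\sum_{A\in\mathcal A}\nu(U\cap A)\le K\nu(U\cap\bigcup\mathcal A)$ for all $U$. Crop condition (parameters $\Phi,K$): $\mathcal C$ is a $\mu$-covering function with parameter $\Phi$, and for every collection $\mathcal A\subseteq\mathcal E$ there exists a $\nu$-Carathéodory (parameter $K$) subcollection $\mathcal D'\subseteq\mathcal A$ such that for every $F$ disjoint from $\bigcup_{D\in\mathcal D'}D$, $\mathbf B_{\mathcal C}(F)=\bigcup_{E\in\mathcal C(F)\setminus\mathcal A}E$. *)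

theory Defs
  imports "HOL-Analysis.Analysis"
begin

type_synonym point = "real \<times> real \<times> real"

definition dyad :: "int \<Rightarrow> int \<Rightarrow> real set" where
  "dyad m l = {(2::real) powi l * of_int m <.. (2::real) powi l * (of_int m + 1)}"

definition YL :: "int \<Rightarrow> point set" where
  "YL L = UNIV \<times> {0 <.. (2::real) powi L} \<times> UNIV"

definition tile :: "int \<Rightarrow> int \<Rightarrow> int \<Rightarrow> point set" where
  "tile m l n = dyad m l \<times> {(2::real) powi (l - 1) <.. (2::real) powi l} \<times> dyad n (- l)"

definition strip :: "int \<Rightarrow> int \<Rightarrow> point set" where
  "strip m l = dyad m l \<times> {0 <.. (2::real) powi l} \<times> UNIV"

definition strips :: "int \<Rightarrow> point set set" where
  "strips L = {strip m l | m l. l \<le> L}"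

definition sigma :: "point set \<Rightarrow> real" where
  "sigma E = (THE s. \<exists>m l. E = strip m l \<and> s = (2::real) powi l)"

definition Nidx :: "int \<Rightarrow> int \<Rightarrow> int \<Rightarrow> int" where
  "Nidx n l l' = (THE k. dyad n (- l) \<subseteq> dyad k (- l'))"

definition tree :: "int \<Rightarrow> int \<Rightarrow> int \<Rightarrow> point set" where
  "tree m l n = (\<Union>l'\<in>{..l}. \<Union>m'\<in>{m'. dyad m' l' \<subseteq> dyad m l}. tile m' l' (Nidx n l l'))"

definition trees :: "int \<Rightarrow> point set set" where
  "trees L = {tree m l n | m l n. l \<le> L}"

definition tau :: "point set \<Rightarrow> real" where
  "tau T = (THE t. \<exists>m l n. T = tree m l n \<and> t = (2::real) powi l)"

definition outer :: "point set set \<Rightarrow> (point set \<Rightarrow> real) \<Rightarrow> point set \<Rightarrow> ennreal" where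
  "outer \<S> w A = (INF \<S>' \<in> {\<S>'. \<S>' \<subseteq> \<S> \<and> A \<subseteq> \<Union>\<S>'}. (\<Sum>\<^sub>\<infinity>S\<in>\<S>'. ennreal (w S)))"

definition mu :: "int \<Rightarrow> point set \<Rightarrow> ennreal" where
  "mu L = outer (strips L) sigma"

definition nu :: "int \<Rightarrow> point set \<Rightarrow> ennreal" where
  "nu L = outer (trees L) tau"

definition upper :: "point set \<Rightarrow> point set" where
  "upper E = {p \<in> E. fst (snd p) > sigma E / 2}"

definition Qc :: "int \<Rightarrow> point set \<Rightarrow> point set set" where
  "Qc L A = {E \<in> strips L. upper E \<inter> A \<noteq> {}}"

definition Nc :: "int \<Rightarrow> point set set \<Rightarrow> point set set" where
  "Nc L \<D>1 = {E \<in> strips L.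
      emeasure lborel (fst ` E \<inter> fst ` (\<Union>\<D>1)) \<ge> emeasure lborel (fst ` E) / 2}"

definition Mc :: "point set set \<Rightarrow> point set set" where
  "Mc \<D>1 = {E \<in> \<D>1. \<forall>E'\<in>\<D>1. E \<subseteq> E' \<longrightarrow> E' = E}"

definition Cc :: "int \<Rightarrow> point set \<Rightarrow> point set set" where
  "Cc L A = Mc (Nc L (Qc L A))"

definition covering_function ::
  "point set \<Rightarrow> point set set \<Rightarrow> (point set \<Rightarrow> ennreal) \<Rightarrow> (point set \<Rightarrow> point set set) \<Rightarrow> real \<Rightarrow> bool" where
  "covering_function Y \<E> \<mu> C \<Phi> \<longleftrightarrow>
     (\<forall>A. A \<subseteq> Y \<longrightarrow> C A \<subseteq> \<E> \<and> disjoint (C A) \<and> A \<subseteq> \<Union>(C A)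
                 \<and> \<mu> (\<Union>(C A)) \<le> ennreal \<Phi> * \<mu> A)
   \<and> (\<forall>A A'. A \<subseteq> A' \<and> A' \<subseteq> Y \<longrightarrow> \<Union>(C A) \<subseteq> \<Union>(C A'))"

definition caratheodory :: "(point set \<Rightarrow> ennreal) \<Rightarrow> real \<Rightarrow> point set set \<Rightarrow> bool" where
  "caratheodory \<nu> K \<A> \<longleftrightarrow> disjoint \<A> \<and>
     (\<forall>U. (\<Sum>\<^sub>\<infinity>A\<in>\<A>. \<nu> (U \<inter> A)) \<le> ennreal K * \<nu> (U \<inter> \<Union>\<A>))"

definition crop_condition ::
  "point set \<Rightarrow> point set set \<Rightarrow> (point set \<Rightarrow> ennreal) \<Rightarrow> (point set \<Rightarrow> ennreal)
     \<Rightarrow> (point set \<Rightarrow> point set set) \<Rightarrow> real \<Rightarrow> real \<Rightarrow> bool" where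
  "crop_condition Y \<E> \<mu> \<nu> C \<Phi> K \<longleftrightarrow>
     covering_function Y \<E> \<mu> C \<Phi> \<and>
     (\<forall>\<A>. \<A> \<subseteq> \<E> \<longrightarrow> (\<exists>\<D>'. \<D>' \<subseteq> \<A> \<and> caratheodory \<nu> K \<D>' \<and>
        (\<forall>F. F \<subseteq> Y \<and> F \<inter> \<Union>\<D>' = {} \<longrightarrow> \<Union>(C F) = \<Union>(C F - \<A>))))"

end

theory Submission
  imports Defs
begin


lemma pw_pos[simp]: "0 < (2::real) powi l" by simp

lemma pw_less_iff[simp]: "(2::real) powi l < 2 powi l' \<longleftrightarrow> l < l'"
  by (metis linorder_not_le not_less_iff_gr_or_eq power_int_strict_increasing one_less_numeral_iff semiring_norm(76))

lemma pw_le_iff[simp]: "(2::real) powi l \<le> 2 powi l' \<longleftrightarrow> l \<le> l'"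
  by (meson linorder_not_le pw_less_iff)

lemma pw_shift: "l \<le> l' \<Longrightarrow> (2::real) powi l' = 2 powi l * 2 ^ nat (l' - l)"
proof -
  assume "l \<le> l'"
  then have "l' = l + int (nat (l' - l))" by simp
  then have "(2::real) powi l' = 2 powi (l + int (nat (l' - l)))" by simp
  also have "\<dots> = 2 powi l * 2 powi (int (nat (l' - l)))" by (rule power_int_add) simp
  also have "(2::real) powi (int (nat (l' - l))) = 2 ^ nat (l' - l)" by (rule power_int_of_nat)
  finally show ?thesis .
qed

lemma pw_m1: "(2::real) powi (l - 1) = 2 powi l / 2"
  using power_int_add[of "2::real" "l - 1" 1] by simp

lemma dyad_mem: "x \<in> dyad m l \<longleftrightarrow> 2 powi l * of_int m < x \<and> x \<le> 2 powi l * (of_int m + 1)"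
  by (simp add: dyad_def)

lemma dyad_idx: "x \<in> dyad m l \<longleftrightarrow> m = \<lceil>x / 2 powi l\<rceil> - 1"
proof -
  have q: "(0::real) < 2 powi l" by simp
  have "x \<in> dyad m l \<longleftrightarrow> of_int m < x / 2 powi l \<and> x / 2 powi l \<le> of_int m + 1"
    unfolding dyad_mem using q by (simp add: field_simps)
  also have "\<dots> \<longleftrightarrow> \<lceil>x / 2 powi l\<rceil> = m + 1" by (simp add: ceiling_eq_iff)
  finally show ?thesis by linarith
qed

lemma dyad_same: "x \<in> dyad m l \<Longrightarrow> x \<in> dyad m' l \<Longrightarrow> m = m'"
  by (simp add: dyad_idx)

lemma dyad_top: "2 powi l * (of_int m + 1) \<in> dyad m l"
  unfolding dyad_mem by simp

lemma dyad_ne: "dyad m l \<noteq> {}" using dyad_top by blast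

lemma dyad_nest:
  assumes "l \<le> l'" "x \<in> dyad m l" "x \<in> dyad m' l'"
  shows "dyad m l \<subseteq> dyad m' l'"
proof
  define q where "q = (2::real) powi l"
  define k where "k = nat (l' - l)"
  have q: "q > 0" unfolding q_def by simp
  have e: "(2::real) powi l' = q * 2 ^ k" unfolding q_def k_def using pw_shift[OF assms(1)] .
  have x1: "q * m < x" "x \<le> q * (m + 1)" using assms(2) unfolding dyad_mem q_def by auto
  have x2: "q * 2^k * m' < x" "x \<le> q * 2^k * (m' + 1)" using assms(3) unfolding dyad_mem e by auto
  have "q * m < q * (2^k * (m' + 1))" using x1 x2 by (simp add: mult.assoc)
  then have "real_of_int m < 2^k * (real_of_int m' + 1)" using q by simp
  then have "real_of_int m < real_of_int (2^k * (m' + 1))" by simp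
  then have a: "m < 2^k * (m'+1)" by (simp only: of_int_less_iff)
  have "q * (2^k * m') < q * (m + 1)" using x1 x2 by (simp add: mult.assoc)
  then have "2^k * real_of_int m' < real_of_int m + 1" using q by simp
  then have "real_of_int (2^k * m') < real_of_int (m + 1)" by simp
  then have b: "2^k * m' < m + 1" by (simp only: of_int_less_iff)
  have a': "real_of_int (m + 1) \<le> real_of_int (2^k * (m'+1))" using a by (simp only: of_int_le_iff)
  have b': "real_of_int (2^k * m') \<le> real_of_int m" using b by (simp only: of_int_le_iff)
  fix y assume "y \<in> dyad m l"
  then have y: "q * m < y" "y \<le> q * (m + 1)" unfolding dyad_mem q_def by auto
  have "q * (2^k * m') \<le> q * m" using b' q by (intro mult_left_mono) auto
  moreover have "q * (m + 1) \<le> q * (2^k * (m'+1))" using a' q by (intro mult_left_mono) auto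
  ultimately show "y \<in> dyad m' l'" unfolding dyad_mem e using y by (simp add: mult.assoc)
qed

lemma dyad_cases:
  assumes "x \<in> dyad m l" "x \<in> dyad m' l'"
  shows "(l \<le> l' \<and> dyad m l \<subseteq> dyad m' l') \<or> (l' \<le> l \<and> dyad m' l' \<subseteq> dyad m l)"
  by (meson assms dyad_nest linorder_le_cases)

lemma dyad_emeasure: "emeasure lborel (dyad m l) = ennreal (2 powi l)"
  unfolding dyad_def by (subst emeasure_lborel_Ioc) (auto simp: algebra_simps)

lemma dyad_sets[measurable]: "dyad m l \<in> sets lborel"
  unfolding dyad_def by simp

lemma strip_mem: "(x, s, y) \<in> strip m l \<longleftrightarrow> x \<in> dyad m l \<and> 0 < s \<and> s \<le> 2 powi l"
  by (simp add: strip_def)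

lemma strip_memE: "p \<in> strip m l \<Longrightarrow> fst p \<in> dyad m l \<and> 0 < fst (snd p) \<and> fst (snd p) \<le> 2 powi l"
  by (cases p) (auto simp: strip_mem)

lemma strip_top: "(2 powi l * (of_int m + 1), 2 powi l, y) \<in> strip m l"
  by (simp add: strip_mem dyad_top)

lemma strip_sub_iff: "strip m l \<subseteq> strip m' l' \<longleftrightarrow> l \<le> l' \<and> dyad m l \<subseteq> dyad m' l'"
proof
  assume h: "strip m l \<subseteq> strip m' l'"
  have "(2 powi l * (of_int m + 1), 2 powi l, 0) \<in> strip m' l'" using h strip_top by blast
  then have "l \<le> l'" by (simp add: strip_mem)
  moreover have "dyad m l \<subseteq> dyad m' l'"
  proof
    fix x assume "x \<in> dyad m l"
    then have "(x, 2 powi l, 0) \<in> strip m l" by (simp add: strip_mem)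
    then have "(x, 2 powi l, 0) \<in> strip m' l'" using h by blast
    then show "x \<in> dyad m' l'" by (simp add: strip_mem)
  qed
  ultimately show "l \<le> l' \<and> dyad m l \<subseteq> dyad m' l'" by blast
next
  assume "l \<le> l' \<and> dyad m l \<subseteq> dyad m' l'"
  then show "strip m l \<subseteq> strip m' l'"
    by (auto simp: strip_def order_trans[OF _ iffD2[OF pw_le_iff]])
qed

lemma strip_inter:
  assumes "p \<in> strip m l" "p \<in> strip m' l'"
  shows "(l \<le> l' \<and> strip m l \<subseteq> strip m' l') \<or> (l' \<le> l \<and> strip m' l' \<subseteq> strip m l)"
proof -
  have "fst p \<in> dyad m l" "fst p \<in> dyad m' l'" using assms strip_memE by blast+
  from dyad_cases[OF this] show ?thesis by (auto simp: strip_sub_iff)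
qed

lemma strip_inj: "strip m l = strip m' l' \<Longrightarrow> m = m' \<and> l = l'"
proof -
  assume h: "strip m l = strip m' l'"
  then have "l \<le> l'" "l' \<le> l" by (metis order_refl strip_sub_iff)+
  then have l: "l = l'" by simp
  have "dyad m l \<subseteq> dyad m' l'" by (metis h order_refl strip_sub_iff)
  then have "m = m'" using dyad_top[of l m] l dyad_same by blast
  with l show ?thesis by simp
qed

lemma sigma_strip[simp]: "sigma (strip m l) = 2 powi l"
  unfolding sigma_def
  by (rule the_equality) (auto dest: strip_inj)

lemma fst_strip[simp]: "fst ` strip m l = dyad m l"
proof
  show "fst ` strip m l \<subseteq> dyad m l" using strip_memE by blast
  show "dyad m l \<subseteq> fst ` strip m l"
  proof
    fix x assume "x \<in> dyad m l"
    then have "(x, 2 powi l, 0) \<in> strip m l" by (simp add: strip_mem)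
    then show "x \<in> fst ` strip m l" by force
  qed
qed

lemma strips_iff: "E \<in> strips L \<longleftrightarrow> (\<exists>m l. E = strip m l \<and> l \<le> L)"
  by (auto simp: strips_def)

lemma strips_countable: "countable (strips L)"
proof -
  have "strips L \<subseteq> (\<lambda>(m, l). strip m l) ` UNIV" by (auto simp: strips_def)
  then show ?thesis by (rule countable_subset[OF _ countable_image]) simp
qed

lemma strip_disj_dyad:
  assumes "strip m l \<inter> strip m' l' = {}" shows "dyad m l \<inter> dyad m' l' = {}"
proof (rule ccontr)
  assume "dyad m l \<inter> dyad m' l' \<noteq> {}"
  then obtain x where x: "x \<in> dyad m l" "x \<in> dyad m' l'" by blast
  have "(x, min (2 powi l) (2 powi l'), 0) \<in> strip m l \<inter> strip m' l'"
    using x by (simp add: strip_mem)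
  with assms show False by blast
qed

lemma strip_nonempty: "strip m l \<noteq> {}" using strip_top by blast

lemma strips_lvl: "strip m l \<in> strips L \<Longrightarrow> l \<le> L"
  by (auto simp: strips_iff dest: strip_inj)

lemma strip_in_strips: "l \<le> L \<Longrightarrow> strip m l \<in> strips L"
  by (auto simp: strips_iff)

lemma Mc_exists:
  assumes D: "\<D> \<subseteq> strips L" and E: "E \<in> \<D>"
  shows "\<exists>E'\<in>Mc \<D>. E \<subseteq> E'"
proof -
  have "E \<in> strips L" using D E by blast
  then obtain m0 l0 where E0: "E = strip m0 l0" unfolding strips_iff by blast
  define S where "S = {l. \<exists>m. strip m l \<in> \<D> \<and> E \<subseteq> strip m l}"
  have SS: "S \<subseteq> {l0..L}"
  proof
    fix l assume "l \<in> S"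
    then obtain m where "strip m l \<in> \<D>" "E \<subseteq> strip m l" unfolding S_def by blast
    then show "l \<in> {l0..L}" using D E0 strips_lvl strip_sub_iff by auto
  qed
  have fin: "finite S" using SS finite_subset by blast
  have ne: "l0 \<in> S" unfolding S_def using E E0 by blast
  define ls where "ls = Max S"
  have "ls \<in> S" unfolding ls_def using fin ne Max_in by blast
  then obtain ms where ms: "strip ms ls \<in> \<D>" "E \<subseteq> strip ms ls" unfolding S_def by blast
  have "strip ms ls \<in> Mc \<D>"
    unfolding Mc_def
  proof (intro CollectI conjI ballI impI)
    show "strip ms ls \<in> \<D>" by fact
    fix E' assume E': "E' \<in> \<D>" "strip ms ls \<subseteq> E'"
    then have "E' \<in> strips L" using D by blast
    then obtain m' l' where E'd: "E' = strip m' l'" unfolding strips_iff by blast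
    have "l' \<in> S" unfolding S_def using E' E'd ms by blast
    then have "l' \<le> ls" unfolding ls_def using fin by simp
    moreover have "ls \<le> l'" "dyad ms ls \<subseteq> dyad m' l'" using E' E'd strip_sub_iff by auto
    ultimately have "l' = ls" "dyad ms ls \<subseteq> dyad m' ls" by auto
    then have "m' = ms" using dyad_top[of ls ms] dyad_same by blast
    then show "E' = strip ms ls" using E'd \<open>l' = ls\<close> by simp
  qed
  with ms show ?thesis by blast
qed

lemma Mc_sub: "Mc \<D> \<subseteq> \<D>" by (auto simp: Mc_def)

lemma Union_Mc: "\<D> \<subseteq> strips L \<Longrightarrow> \<Union>(Mc \<D>) = \<Union>\<D>"
  using Mc_exists Mc_sub by blast

lemma strips_inter:
  assumes "E \<in> strips L" "E' \<in> strips L" "E \<inter> E' \<noteq> {}"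
  shows "E \<subseteq> E' \<or> E' \<subseteq> E"
  using assms strip_inter by (auto simp: strips_iff) blast+

lemma Mc_disjoint:
  assumes "\<D> \<subseteq> strips L" shows "disjoint (Mc \<D>)"
proof (rule pairwiseI)
  fix E E' assume h: "E \<in> Mc \<D>" "E' \<in> Mc \<D>" "E \<noteq> E'"
  show "disjnt E E'"
  proof (rule ccontr)
    assume "\<not> disjnt E E'"
    then have "E \<inter> E' \<noteq> {}" by (simp add: disjnt_def)
    moreover have "E \<in> strips L" "E' \<in> strips L" using h assms Mc_sub by blast+
    ultimately have "E \<subseteq> E' \<or> E' \<subseteq> E" using strips_inter by blast
    then show False using h unfolding Mc_def by blast
  qed
qed



lemma Nidx_ex: "l' \<le> l \<Longrightarrow> \<exists>k. dyad n (- l) \<subseteq> dyad k (- l')"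
proof -
  assume h: "l' \<le> l"
  define x where "x = (2::real) powi (- l) * (of_int n + 1)"
  have x: "x \<in> dyad n (- l)" unfolding x_def by (rule dyad_top)
  define k where "k = \<lceil>x / 2 powi (- l')\<rceil> - 1"
  have "x \<in> dyad k (- l')" unfolding k_def by (simp add: dyad_idx)
  then show ?thesis using dyad_nest[of "- l" "- l'" x n k] h x by auto
qed

lemma Nidx_uniq: "dyad n (- l) \<subseteq> dyad k (- l') \<Longrightarrow> dyad n (- l) \<subseteq> dyad k' (- l') \<Longrightarrow> k = k'"
  using dyad_top[of "- l" n] dyad_same by blast

lemma Nidx_spec: "l' \<le> l \<Longrightarrow> dyad n (- l) \<subseteq> dyad (Nidx n l l') (- l')"
proof -
  assume "l' \<le> l"
  then obtain k where k: "dyad n (- l) \<subseteq> dyad k (- l')" using Nidx_ex by blast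
  show ?thesis unfolding Nidx_def
    by (rule theI[of _ k]) (use k Nidx_uniq in blast)+
qed

lemma Nidx_eq: "l' \<le> l \<Longrightarrow> dyad n (- l) \<subseteq> dyad k (- l') \<Longrightarrow> Nidx n l l' = k"
  using Nidx_spec Nidx_uniq by blast

lemma Nidx_trans: "l' \<le> b \<Longrightarrow> b \<le> l \<Longrightarrow> Nidx (Nidx n l b) b l' = Nidx n l l'"
proof -
  assume h: "l' \<le> b" "b \<le> l"
  have "dyad n (- l) \<subseteq> dyad (Nidx n l b) (- b)" using h by (simp add: Nidx_spec)
  also have "\<dots> \<subseteq> dyad (Nidx (Nidx n l b) b l') (- l')" using h by (simp add: Nidx_spec)
  finally show ?thesis using h by (intro Nidx_eq[symmetric]) auto
qed

lemma tree_mem: "p \<in> tree m l n \<longleftrightarrow> (\<exists>l' m'. l' \<le> l \<and> dyad m' l' \<subseteq> dyad m l \<and> p \<in> tile m' l' (Nidx n l l'))"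
  unfolding tree_def by (simp only: UN_iff mem_Collect_eq atMost_iff) blast

lemma tile_mem: "(x, s, y) \<in> tile m l k \<longleftrightarrow> x \<in> dyad m l \<and> 2 powi (l - 1) < s \<and> s \<le> 2 powi l \<and> y \<in> dyad k (- l)"
  by (simp add: tile_def)

lemma tree_sub_strip: "tree m l n \<subseteq> strip m l"
proof
  fix p assume "p \<in> tree m l n"
  then have "p \<in> tree m l n" by blast
  then obtain l' m' where h: "l' \<le> l" "dyad m' l' \<subseteq> dyad m l" "p \<in> tile m' l' (Nidx n l l')"
    unfolding tree_mem by blast
  obtain x s y where p: "p = (x, s, y)" by (cases p) auto
  have a: "2 powi (l' - 1) < s" "s \<le> 2 powi l'" "x \<in> dyad m' l'" using h(3) unfolding p tile_mem by auto
  have b: "(0::real) < 2 powi (l' - 1)" by simp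
  have c: "(2::real) powi l' \<le> 2 powi l" using h(1) by simp
  have "0 < s" "s \<le> 2 powi l" using a b c by linarith+
  then show "p \<in> strip m l" unfolding p strip_mem using h(2) a by auto
qed

lemma tree_top: "\<exists>y. (2 powi l * (of_int m + 1), 2 powi l, y) \<in> tree m l n"
proof -
  define y where "y = (2::real) powi (- l) * (of_int (Nidx n l l) + 1)"
  have "(2 powi l * (of_int m + 1), 2 powi l, y) \<in> tile m l (Nidx n l l)"
    unfolding tile_mem y_def by (simp add: dyad_top pw_m1)
  then show ?thesis unfolding tree_mem by blast
qed

lemma tree_lvl: "tree m l n = tree m' l' n' \<Longrightarrow> l \<le> l'"
proof -
  assume h: "tree m l n = tree m' l' n'"
  obtain y where "(2 powi l * (of_int m + 1), 2 powi l, y) \<in> tree m l n" using tree_top by blast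
  then have "(2 powi l * (of_int m + 1), 2 powi l, y) \<in> strip m' l'" using h tree_sub_strip by blast
  then show "l \<le> l'" by (simp add: strip_mem)
qed

lemma tau_tree[simp]: "tau (tree m l n) = 2 powi l"
  unfolding tau_def
proof (rule the_equality)
  show "\<exists>m' l' n'. tree m l n = tree m' l' n' \<and> 2 powi l = 2 powi l'" by blast
  fix t assume "\<exists>m' l' n'. tree m l n = tree m' l' n' \<and> t = 2 powi l'"
  then obtain m' l' n' where "tree m l n = tree m' l' n'" "t = 2 powi l'" by blast
  then show "t = 2 powi l" using tree_lvl by (metis order_antisym)
qed

lemma trees_iff: "T \<in> trees L \<longleftrightarrow> (\<exists>m l n. T = tree m l n \<and> l \<le> L)"
  unfolding trees_def by blast

lemma tree_cut:
  assumes "b < l" "dyad a b \<subseteq> dyad m l"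
  shows "tree m l n \<inter> strip a b \<subseteq> tree a b (Nidx n l b)"
proof
  fix p assume p: "p \<in> tree m l n \<inter> strip a b"
  then have "p \<in> tree m l n" by blast
  then obtain l' m' where h: "l' \<le> l" "dyad m' l' \<subseteq> dyad m l" "p \<in> tile m' l' (Nidx n l l')"
    unfolding tree_mem by blast
  obtain x s y where pe: "p = (x, s, y)" by (cases p) auto
  have t: "2 powi (l' - 1) < s" "x \<in> dyad m' l'" using h(3) unfolding pe tile_mem by auto
  have st: "s \<le> 2 powi b" "x \<in> dyad a b" using IntD2[OF p] unfolding pe strip_mem by auto
  have "(2::real) powi (l' - 1) < 2 powi b" using t st by linarith
  then have "l' - 1 < b" by (simp only: pw_less_iff)
  then have lb: "l' \<le> b" by linarith
  have sub: "dyad m' l' \<subseteq> dyad a b" using dyad_nest[OF lb t(2) st(2)] .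
  have "Nidx (Nidx n l b) b l' = Nidx n l l'" using Nidx_trans[OF lb] assms(1) by (meson less_imp_le)
  then have "p \<in> tile m' l' (Nidx (Nidx n l b) b l')" using h(3) by (rule ssubst)
  then show "p \<in> tree a b (Nidx n l b)" unfolding tree_mem using lb sub by (intro exI conjI)
qed



lemma infsum_image_le:
  fixes g :: "'b \<Rightarrow> ennreal"
  shows "infsum g (f ` I) \<le> infsum (\<lambda>i. g (f i)) I"
proof -
  define J where "J = inv_into I f ` (f ` I)"
  have JI: "J \<subseteq> I" unfolding J_def by (auto intro: inv_into_into)
  have inj: "inj_on f J" unfolding J_def
    by (rule inj_onI) (auto simp: f_inv_into_f)
  have fJ: "f ` J = f ` I"
  proof -
    have "f ` J = (\<lambda>y. f (inv_into I f y)) ` (f ` I)" unfolding J_def by (simp add: image_image)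
    also have "\<dots> = (\<lambda>y. y) ` (f ` I)" by (rule image_cong) (auto simp: f_inv_into_f)
    finally show ?thesis by simp
  qed
  have "infsum g (f ` I) = infsum (g \<circ> f) J" using infsum_reindex[OF inj, of g] fJ by simp
  also have "\<dots> \<le> infsum (\<lambda>i. g (f i)) I"
    by (rule infsum_mono_neutral) (use JI in \<open>auto intro: nonneg_summable_on_complete\<close>)
  finally show ?thesis .
qed

lemma outer_le: "\<S>' \<subseteq> \<S> \<Longrightarrow> A \<subseteq> \<Union>\<S>' \<Longrightarrow> outer \<S> w A \<le> (\<Sum>\<^sub>\<infinity>S\<in>\<S>'. ennreal (w S))"
  unfolding outer_def by (rule INF_lower) simp

lemma outer_img:
  assumes "f ` I \<subseteq> \<S>" "A \<subseteq> \<Union>(f ` I)"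
  shows "outer \<S> w A \<le> (\<Sum>\<^sub>\<infinity>i\<in>I. ennreal (w (f i)))"
  using outer_le[OF assms] infsum_image_le[of "\<lambda>S. ennreal (w S)" f I] by (rule order_trans)

lemma emeasure_Union_le_infsum:
  assumes "countable \<C>" "\<C> \<subseteq> sets M"
  shows "emeasure M (\<Union>\<C>) \<le> infsum (emeasure M) \<C>"
proof (cases "finite \<C>")
  case True
  have "emeasure M (\<Union>C\<in>\<C>. id C) \<le> (\<Sum>C\<in>\<C>. emeasure M (id C))"
    by (rule emeasure_subadditive_finite) (use True assms in auto)
  then show ?thesis using True by simp
next
  case False
  obtain g where g: "bij_betw g (UNIV :: nat set) \<C>" using countable_infiniteE'[OF assms(1) False] by blast
  have U: "\<Union>\<C> = (\<Union>i. g i)" using g by (auto simp: bij_betw_def)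
  have "emeasure M (\<Union>i. g i) \<le> (\<Sum>i. emeasure M (g i))"
    by (rule emeasure_subadditive_countably) (use g assms in \<open>auto simp: bij_betw_def\<close>)
  also have "\<dots> = (SUP n. sum (\<lambda>i. emeasure M (g i)) {..<n})" by (rule suminf_eq_SUP)
  also have "\<dots> \<le> infsum (\<lambda>i. emeasure M (g i)) UNIV"
  proof (rule SUP_least)
    fix n
    have "sum (\<lambda>i. emeasure M (g i)) {..<n} = infsum (\<lambda>i. emeasure M (g i)) {..<n}" by simp
    also have "\<dots> \<le> infsum (\<lambda>i. emeasure M (g i)) UNIV" by (rule infsum_mono_neutral) (auto intro: nonneg_summable_on_complete)
    finally show "sum (\<lambda>i. emeasure M (g i)) {..<n} \<le> infsum (\<lambda>i. emeasure M (g i)) UNIV" .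
  qed
  also have "\<dots> = infsum (emeasure M) (g ` UNIV)"
    using infsum_reindex[of g UNIV "emeasure M"] g by (simp add: bij_betw_def comp_def)
  also have "g ` UNIV = \<C>" using g by (simp add: bij_betw_def)
  finally show ?thesis using U by simp
qed

lemma infsum_le_emeasure_disjoint:
  assumes "disjoint_family_on f I" "\<And>i. i \<in> I \<Longrightarrow> f i \<in> sets M" "\<And>i. i \<in> I \<Longrightarrow> f i \<subseteq> B" "B \<in> sets M"
  shows "infsum (\<lambda>i. emeasure M (f i)) I \<le> emeasure M B"
proof (rule infsum_le_finite_sums)
  show "(\<lambda>i. emeasure M (f i)) summable_on I" by (rule nonneg_summable_on_complete) simp
  fix F assume F: "finite F" "F \<subseteq> I"
  have "sum (\<lambda>i. emeasure M (f i)) F = emeasure M (\<Union>i\<in>F. f i)"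
    by (rule sum_emeasure) (use F assms disjoint_family_on_mono[OF F(2) assms(1)] in auto)
  also have "\<dots> \<le> emeasure M B" by (rule emeasure_mono) (use F assms in auto)
  finally show "sum (\<lambda>i. emeasure M (f i)) F \<le> emeasure M B" .
qed

lemma sum_infsum_ennreal:
  fixes f :: "'a \<Rightarrow> 'b \<Rightarrow> ennreal"
  assumes "finite F"
  shows "(\<Sum>a\<in>F. infsum (f a) I) = infsum (\<lambda>i. \<Sum>a\<in>F. f a i) I"
  using assms
proof (induction F rule: finite_induct)
  case empty then show ?case by simp
next
  case (insert a F)
  have "infsum (\<lambda>i. f a i + (\<Sum>a\<in>F. f a i)) I = infsum (f a) I + infsum (\<lambda>i. \<Sum>a\<in>F. f a i) I"
    by (rule infsum_add) (auto intro: nonneg_summable_on_complete)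
  then show ?case using insert by simp
qed

lemma eh1: "0 \<le> x \<Longrightarrow> ennreal x / 2 \<le> ennreal x"
  by (simp add: ennreal_divide_numeral)

lemma eh2: "0 \<le> x \<Longrightarrow> ennreal x / 2 \<le> y \<Longrightarrow> ennreal x \<le> 2 * y"
proof -
  assume h: "0 \<le> x" "ennreal x / 2 \<le> y"
  have "ennreal x = 2 * ennreal (x / 2)" using h(1) ennreal_mult[of 2 "x / 2"] by simp
  also have "\<dots> \<le> 2 * y" using h by (simp add: ennreal_divide_numeral mult_left_mono)
  finally show ?thesis .
qed

lemma eh3: "0 < x \<Longrightarrow> \<not> ennreal x / 2 \<le> 0"
  by (simp add: ennreal_divide_numeral)



lemma strip_inter_le:
  assumes "p \<in> strip m l" "p \<in> strip m' l'" "l \<le> l'"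
  shows "strip m l \<subseteq> strip m' l'"
  using assms strip_memE dyad_nest strip_sub_iff by metis

lemma stripsE:
  assumes "E \<in> strips L" obtains m l where "E = strip m l" "l \<le> L"
  using assms unfolding strips_iff by blast

lemma upper_mem: "p \<in> upper E \<longleftrightarrow> p \<in> E \<and> fst (snd p) > sigma E / 2"
  by (simp add: upper_def)

lemma upper_sub:
  assumes "p \<in> upper (strip m l)" "p \<in> strip m' l'"
  shows "strip m l \<subseteq> strip m' l'"
proof -
  have a: "p \<in> strip m l" "fst (snd p) > 2 powi l / 2" using assms(1) by (auto simp: upper_mem)
  have b: "fst (snd p) \<le> 2 powi l'" using assms(2) strip_memE by blast
  have "(2::real) powi (l - 1) < 2 powi l'" using a b by (simp add: pw_m1)
  then have "l - 1 < l'" by (simp only: pw_less_iff)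
  then have "l \<le> l'" by linarith
  then show ?thesis using strip_inter_le a(1) assms(2) by blast
qed

lemma Qc_sub: "Qc L A \<subseteq> strips L" by (auto simp: Qc_def)
lemma Nc_sub: "Nc L D \<subseteq> strips L" by (auto simp: Nc_def)

lemma fst_Union_sets:
  assumes "D \<subseteq> strips L" shows "fst ` \<Union>D \<in> sets lborel"
proof -
  have e: "fst ` \<Union>D = \<Union>((`) fst ` D)" by auto
  have "countable ((`) fst ` D)" using countable_subset[OF assms strips_countable] by blast
  moreover have "(`) fst ` D \<subseteq> sets lborel"
  proof
    fix X assume "X \<in> (`) fst ` D"
    then obtain E where E: "E \<in> D" "X = fst ` E" by blast
    then have "E \<in> strips L" using assms by blast
    then obtain m l where "E = strip m l" by (rule stripsE)
    then show "X \<in> sets lborel" using E dyad_sets[of m l] by simp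
  qed
  ultimately show ?thesis unfolding e by (rule sets.countable_Union)
qed

lemma Nc_self:
  assumes "D \<subseteq> strips L" "E \<in> D" shows "E \<in> Nc L D"
proof -
  obtain m l where E: "E = strip m l" "l \<le> L" using assms(2) assms(1) stripsE by blast
  have "fst ` E \<subseteq> fst ` \<Union>D" using assms(2) by blast
  then have "fst ` E \<inter> fst ` \<Union>D = dyad m l" using E by auto
  then show ?thesis unfolding Nc_def using assms E
    by (auto simp: dyad_emeasure eh1)
qed

lemma Nc_mono:
  assumes "D \<subseteq> D'" "D' \<subseteq> strips L" shows "Nc L D \<subseteq> Nc L D'"
proof
  fix E assume E: "E \<in> Nc L D"
  then have "E \<in> strips L" by (auto simp: Nc_def)
  then obtain m l where El: "E = strip m l" "l \<le> L" by (rule stripsE)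
  have "emeasure lborel (fst ` E \<inter> fst ` \<Union>D) \<le> emeasure lborel (fst ` E \<inter> fst ` \<Union>D')"
    by (rule emeasure_mono) (use assms fst_Union_sets[OF assms(2)] El in auto)
  then show "E \<in> Nc L D'" using E unfolding Nc_def by (auto intro: order_trans)
qed

lemma Qc_mono: "A \<subseteq> A' \<Longrightarrow> Qc L A \<subseteq> Qc L A'"
  by (auto simp: Qc_def)

lemma Union_Cc: "\<Union>(Cc L A) = \<Union>(Nc L (Qc L A))"
  unfolding Cc_def by (rule Union_Mc[OF Nc_sub])

lemma Cc_mono: "A \<subseteq> A' \<Longrightarrow> \<Union>(Cc L A) \<subseteq> \<Union>(Cc L A')"
  unfolding Union_Cc using Nc_mono[OF Qc_mono Qc_sub] by blast

lemma exists_upper: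
  assumes "p \<in> YL L" shows "\<exists>m l. l \<le> L \<and> p \<in> upper (strip m l)"
proof -
  obtain x s y where p: "p = (x, s, y)" by (cases p) auto
  have s: "0 < s" "s \<le> 2 powi L" using assms by (auto simp: YL_def p)
  have pw: "\<And>k. (2::real) powi k = 2 powr real_of_int k" by (simp add: powr_real_of_int')
  define l where "l = \<lceil>log 2 s\<rceil>"
  have "s \<le> 2 powr real_of_int L" using s pw by simp
  then have "log 2 s \<le> real_of_int L" using s by (simp add: log_le_iff)
  then have lL: "l \<le> L" unfolding l_def by (simp add: ceiling_le_iff)
  have "log 2 s \<le> real_of_int l" unfolding l_def by simp
  then have s1: "s \<le> 2 powi l" using s by (simp add: log_le_iff pw)
  have "real_of_int (l - 1) < log 2 s" unfolding l_def by linarith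
  then have "2 powr real_of_int (l - 1) < s" using s by (simp add: less_log_iff)
  then have s2: "2 powi l / 2 < s" using pw[of "l - 1"] by (simp add: pw_m1)
  define m where "m = \<lceil>x / 2 powi l\<rceil> - 1"
  have "x \<in> dyad m l" unfolding m_def by (simp add: dyad_idx)
  then have "p \<in> upper (strip m l)" using s s1 s2 by (simp add: upper_mem p strip_mem)
  then show ?thesis using lL by blast
qed

lemma Cc_cover:
  assumes "A \<subseteq> YL L" shows "A \<subseteq> \<Union>(Cc L A)"
proof
  fix p assume pA: "p \<in> A"
  then obtain m l where ml: "l \<le> L" "p \<in> upper (strip m l)" using exists_upper assms by blast
  then have "strip m l \<in> Qc L A" using pA by (auto simp: Qc_def strips_iff)
  then have "strip m l \<in> Nc L (Qc L A)" using Nc_self[OF Qc_sub] by blast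
  moreover have "p \<in> strip m l" using ml by (simp add: upper_mem)
  ultimately show "p \<in> \<Union>(Cc L A)" unfolding Union_Cc by blast
qed



lemma summ: "(f :: 'a \<Rightarrow> ennreal) summable_on A"
  by (rule nonneg_summable_on_complete) simp

lemma sum_le_infsum_ennreal: "finite F \<Longrightarrow> F \<subseteq> A \<Longrightarrow> sum (f :: 'a \<Rightarrow> ennreal) F \<le> infsum f A"
proof -
  assume F: "finite F" "F \<subseteq> A"
  have "sum f F = infsum f F" using F by simp
  also have "\<dots> \<le> infsum f A" by (rule infsum_mono_neutral) (use F in \<open>auto intro: summ\<close>)
  finally show ?thesis .
qed

lemma infsum_cmult_le: "(\<Sum>\<^sub>\<infinity>x\<in>A. c * f x) \<le> (c::ennreal) * infsum f A"
proof (rule infsum_le_finite_sums[OF summ])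
  fix F assume F: "finite F" "F \<subseteq> A"
  have "(\<Sum>x\<in>F. c * f x) = c * sum f F" by (simp add: sum_distrib_left)
  also have "\<dots> \<le> c * infsum f A" using sum_le_infsum_ennreal[OF F] by (rule mult_left_mono) simp
  finally show "(\<Sum>x\<in>F. c * f x) \<le> c * infsum f A" .
qed

lemma mu_bound:
  assumes "A \<subseteq> YL L" shows "mu L (\<Union>(Cc L A)) \<le> 2 * mu L A"
proof -
  define Q where "Q = Qc L A"
  define N where "N = Nc L Q"
  define M where "M = Mc N"
  define P where "P = fst ` \<Union>Q"
  have Qs: "Q \<subseteq> strips L" unfolding Q_def by (rule Qc_sub)
  have Ns: "N \<subseteq> strips L" unfolding N_def by (rule Nc_sub)
  have MN: "M \<subseteq> N" unfolding M_def by (rule Mc_sub)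
  have Ms: "M \<subseteq> strips L" using MN Ns by blast
  have Psets: "P \<in> sets lborel" unfolding P_def by (rule fst_Union_sets[OF Qs])
  have s1: "mu L (\<Union>(Cc L A)) \<le> (\<Sum>\<^sub>\<infinity>E\<in>M. ennreal (sigma E))"
    unfolding mu_def Cc_def M_def[symmetric] N_def[symmetric] Q_def[symmetric]
    by (rule outer_le[OF Ms]) simp
  have s2: "(\<Sum>\<^sub>\<infinity>E\<in>M. ennreal (sigma E)) \<le> (\<Sum>\<^sub>\<infinity>E\<in>M. 2 * emeasure lborel (fst ` E \<inter> P))"
  proof (rule infsum_mono[OF summ summ])
    fix E assume "E \<in> M"
    then have EN: "E \<in> N" using MN by blast
    then have "E \<in> strips L" using Ns by blast
    then obtain m l where E: "E = strip m l" by (rule stripsE)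
    have "emeasure lborel (fst ` E) / 2 \<le> emeasure lborel (fst ` E \<inter> P)"
      using EN unfolding N_def Nc_def P_def by blast
    then have "ennreal (2 powi l) / 2 \<le> emeasure lborel (fst ` E \<inter> P)"
      unfolding E by (simp add: dyad_emeasure)
    then show "ennreal (sigma E) \<le> 2 * emeasure lborel (fst ` E \<inter> P)"
      unfolding E using eh2 by simp
  qed
  have s3: "(\<Sum>\<^sub>\<infinity>E\<in>M. 2 * emeasure lborel (fst ` E \<inter> P)) \<le> 2 * (\<Sum>\<^sub>\<infinity>E\<in>M. emeasure lborel (fst ` E \<inter> P))"
    by (rule infsum_cmult_le)
  have s4: "(\<Sum>\<^sub>\<infinity>E\<in>M. emeasure lborel (fst ` E \<inter> P)) \<le> emeasure lborel P"
  proof (rule infsum_le_emeasure_disjoint[OF _ _ _ Psets])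
    show "disjoint_family_on (\<lambda>E. fst ` E \<inter> P) M"
    unfolding disjoint_family_on_def
    proof (intro ballI impI)
      fix E E' assume h: "E \<in> M" "E' \<in> M" "E \<noteq> E'"
      have "disjoint M" unfolding M_def by (rule Mc_disjoint[OF Ns])
      then have d: "E \<inter> E' = {}" using h by (auto simp: pairwise_def disjnt_def)
      have "E \<in> strips L" "E' \<in> strips L" using h Ms by blast+
      then obtain m l m' l' where ee: "E = strip m l" "E' = strip m' l'" by (metis stripsE)
      then have "dyad m l \<inter> dyad m' l' = {}" using strip_disj_dyad d by blast
      then show "(fst ` E \<inter> P) \<inter> (fst ` E' \<inter> P) = {}" using ee by auto
    qed
    fix E assume "E \<in> M"
    then have "E \<in> strips L" using Ms by blast
    then obtain m l where "E = strip m l" by (rule stripsE)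
    then show "fst ` E \<inter> P \<in> sets lborel" using Psets by simp
    show "fst ` E \<inter> P \<subseteq> P" by blast
  qed
  have s5: "emeasure lborel P \<le> mu L A"
    unfolding mu_def outer_def
  proof (rule INF_greatest)
    fix S assume "S \<in> {S. S \<subseteq> strips L \<and> A \<subseteq> \<Union>S}"
    then have S: "S \<subseteq> strips L" "A \<subseteq> \<Union>S" by auto
    have PS: "P \<subseteq> fst ` \<Union>S"
    proof
      fix x assume "x \<in> P"
      then obtain q E where q: "x = fst q" "q \<in> E" "E \<in> Q" unfolding P_def by blast
      then obtain p where p: "p \<in> upper E" "p \<in> A" unfolding Q_def Qc_def by blast
      then obtain S0 where S0: "S0 \<in> S" "p \<in> S0" using S by blast
      have "E \<in> strips L" using q Qs by blast
      then obtain m l where E: "E = strip m l" by (rule stripsE)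
      have "S0 \<in> strips L" using S0 S by blast
      then obtain m' l' where S0e: "S0 = strip m' l'" by (rule stripsE)
      have "E \<subseteq> S0" using upper_sub p S0 E S0e by blast
      then show "x \<in> fst ` \<Union>S" using q S0 by blast
    qed
    have "emeasure lborel P \<le> emeasure lborel (fst ` \<Union>S)"
      by (rule emeasure_mono[OF PS fst_Union_sets[OF S(1)]])
    also have "fst ` \<Union>S = \<Union>((`) fst ` S)" by auto
    also have "emeasure lborel (\<Union>((`) fst ` S)) \<le> infsum (emeasure lborel) ((`) fst ` S)"
    proof (rule emeasure_Union_le_infsum)
      show "countable ((`) fst ` S)" using countable_subset[OF S(1) strips_countable] by blast
      show "(`) fst ` S \<subseteq> sets lborel"
      proof
        fix X assume "X \<in> (`) fst ` S"
        then obtain E where E: "E \<in> S" "X = fst ` E" by blast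
        then have "E \<in> strips L" using S by blast
        then obtain m l where "E = strip m l" by (rule stripsE)
        then show "X \<in> sets lborel" using E dyad_sets[of m l] by simp
      qed
    qed
    also have "\<dots> \<le> (\<Sum>\<^sub>\<infinity>E\<in>S. emeasure lborel (fst ` E))" by (rule infsum_image_le)
    also have "\<dots> = (\<Sum>\<^sub>\<infinity>E\<in>S. ennreal (sigma E))"
    proof (rule infsum_cong)
      fix E assume "E \<in> S"
      then have "E \<in> strips L" using S by blast
      then obtain m l where "E = strip m l" by (rule stripsE)
      then show "emeasure lborel (fst ` E) = ennreal (sigma E)" by (simp add: dyad_emeasure)
    qed
    finally show "emeasure lborel P \<le> (\<Sum>\<^sub>\<infinity>E\<in>S. ennreal (sigma E))" .
  qed
  have "mu L (\<Union>(Cc L A)) \<le> 2 * emeasure lborel P"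
    using s1 s2 s3 s4 by (metis (no_types, lifting) mult_left_mono order_trans zero_le)
  also have "\<dots> \<le> 2 * mu L A" using s5 by (simp add: mult_left_mono)
  finally show ?thesis .
qed

lemma crop_F:
  assumes As: "\<A> \<subseteq> strips L" and F: "F \<inter> \<Union>(Mc \<A>) = {}"
  shows "Cc L F \<inter> \<A> = {}"
proof (rule ccontr)
  assume "Cc L F \<inter> \<A> \<noteq> {}"
  then obtain E where E: "E \<in> Cc L F" "E \<in> \<A>" by blast
  have EF: "E \<inter> F = {}" using F E Union_Mc[OF As] by blast
  have EN: "E \<in> Nc L (Qc L F)" and Emax: "\<And>E'. E' \<in> Nc L (Qc L F) \<Longrightarrow> E \<subseteq> E' \<Longrightarrow> E' = E"
    using E(1) unfolding Cc_def Mc_def by blast+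
  have "E \<in> strips L" using E As by blast
  then obtain a b where Eab: "E = strip a b" by (rule stripsE)
  have disj: "fst ` E \<inter> fst ` \<Union>(Qc L F) = {}"
  proof (rule ccontr)
    assume "fst ` E \<inter> fst ` \<Union>(Qc L F) \<noteq> {}"
    then obtain G x where G: "G \<in> Qc L F" "x \<in> fst ` E" "x \<in> fst ` G" by blast
    have GS: "G \<in> strips L" using G Qc_sub by blast
    then obtain c d where Gcd: "G = strip c d" by (rule stripsE)
    have "dyad a b \<inter> dyad c d \<noteq> {}" using G Eab Gcd by auto
    then have "E \<inter> G \<noteq> {}" using strip_disj_dyad Eab Gcd by blast
    then have "E \<subseteq> G \<or> G \<subseteq> E" using strips_inter \<open>E \<in> strips L\<close> GS by blast
    moreover have "E \<subseteq> G \<Longrightarrow> G = E" using Emax Nc_self[OF Qc_sub G(1)] by blast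
    ultimately have "G \<subseteq> E" by blast
    moreover obtain p where "p \<in> upper G" "p \<in> F" using G(1) unfolding Qc_def by blast
    ultimately show False using EF by (auto simp: upper_mem)
  qed
  have "emeasure lborel (fst ` E) / 2 \<le> emeasure lborel (fst ` E \<inter> fst ` \<Union>(Qc L F))"
    using EN unfolding Nc_def by blast
  then have "ennreal (2 powi b) / 2 \<le> 0" using disj Eab by (simp add: dyad_emeasure)
  then show False using eh3[of "2 powi b"] by simp
qed



lemma pair_bound:
  assumes "tree m l n \<inter> strip a b \<noteq> {}"
  shows "ennreal (tau (if b < l then tree a b (Nidx n l b) else tree m l n)) \<le> emeasure lborel (dyad a b \<inter> dyad m l)"
proof -
  obtain p where p: "p \<in> tree m l n" "p \<in> strip a b" using assms by blast
  have pm: "p \<in> strip m l" using p(1) tree_sub_strip by blast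
  show ?thesis
  proof (cases "b < l")
    case True
    then have "strip a b \<subseteq> strip m l" using strip_inter_le[OF p(2) pm] by simp
    then have "dyad a b \<subseteq> dyad m l" by (simp add: strip_sub_iff)
    then have "dyad a b \<inter> dyad m l = dyad a b" by blast
    then show ?thesis using True by (simp add: dyad_emeasure)
  next
    case False
    then have "strip m l \<subseteq> strip a b" using strip_inter_le[OF pm p(2)] by simp
    then have "dyad m l \<subseteq> dyad a b" by (simp add: strip_sub_iff)
    then have "dyad a b \<inter> dyad m l = dyad m l" by blast
    then show ?thesis using False by (simp add: dyad_emeasure)
  qed
qed

lemma carat_main:
  assumes Ds: "\<D> \<subseteq> strips L" and Dd: "disjoint \<D>"
    and Ts: "\<T> \<subseteq> trees L" and cov: "U \<inter> \<Union>\<D> \<subseteq> \<Union>\<T>"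
  shows "(\<Sum>\<^sub>\<infinity>A\<in>\<D>. nu L (U \<inter> A)) \<le> (\<Sum>\<^sub>\<infinity>T\<in>\<T>. ennreal (tau T))"
proof -
  have "\<forall>A\<in>\<D>. \<exists>ab. A = strip (fst ab) (snd ab)"
  proof
    fix A assume "A \<in> \<D>"
    then have "A \<in> strips L" using Ds by blast
    then obtain a b where "A = strip a b" by (rule stripsE)
    then show "\<exists>ab. A = strip (fst ab) (snd ab)" by (intro exI[of _ "(a, b)"]) simp
  qed
  then obtain fa where fa: "\<And>A. A \<in> \<D> \<Longrightarrow> A = strip (fst (fa A)) (snd (fa A))" by metis
  have "\<forall>T\<in>\<T>. \<exists>x. T = tree (fst x) (fst (snd x)) (snd (snd x)) \<and> fst (snd x) \<le> L"
  proof
    fix T assume "T \<in> \<T>"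
    then have "T \<in> trees L" using Ts by blast
    then obtain m l n where "T = tree m l n" "l \<le> L" unfolding trees_iff by blast
    then show "\<exists>x. T = tree (fst x) (fst (snd x)) (snd (snd x)) \<and> fst (snd x) \<le> L"
      by (intro exI[of _ "(m, l, n)"]) simp
  qed
  then obtain ft where ft: "\<And>T. T \<in> \<T> \<Longrightarrow> T = tree (fst (ft T)) (fst (snd (ft T))) (snd (snd (ft T))) \<and> fst (snd (ft T)) \<le> L"
    by metis
  define sa where "sa A = fst (fa A)" for A
  define sb where "sb A = snd (fa A)" for A
  define tm where "tm T = fst (ft T)" for T
  define tl where "tl T = fst (snd (ft T))" for T
  define tn where "tn T = snd (snd (ft T))" for T
  have fa': "\<And>A. A \<in> \<D> \<Longrightarrow> A = strip (sa A) (sb A)" using fa unfolding sa_def sb_def by blast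
  have ft': "\<And>T. T \<in> \<T> \<Longrightarrow> T = tree (tm T) (tl T) (tn T)" "\<And>T. T \<in> \<T> \<Longrightarrow> tl T \<le> L"
    using ft unfolding tm_def tl_def tn_def by blast+
  define t where "t T A = (if sb A < tl T then tree (sa A) (sb A) (Nidx (tn T) (tl T) (sb A)) else tree (tm T) (tl T) (tn T))" for T A
  define c where "c T A = (if T \<inter> A = {} then 0 else ennreal (tau (t T A)))" for T A
  have claim1: "nu L (U \<inter> A) \<le> (\<Sum>\<^sub>\<infinity>T\<in>\<T>. c T A)" if A: "A \<in> \<D>" for A
  proof -
    define I where "I = {T \<in> \<T>. T \<inter> A \<noteq> {}}"
    have "nu L (U \<inter> A) \<le> (\<Sum>\<^sub>\<infinity>T\<in>I. ennreal (tau (t T A)))"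
      unfolding nu_def
    proof (rule outer_img)
      show "(\<lambda>T. t T A) ` I \<subseteq> trees L"
      proof
        fix X assume "X \<in> (\<lambda>T. t T A) ` I"
        then obtain T where T: "T \<in> \<T>" "X = t T A" unfolding I_def by blast
        show "X \<in> trees L"
        proof (cases "sb A < tl T")
          case True
          then have "X = tree (sa A) (sb A) (Nidx (tn T) (tl T) (sb A))" "sb A \<le> L"
            using T ft'(2)[OF T(1)] unfolding t_def by auto
          then show ?thesis unfolding trees_iff by blast
        next
          case False
          then have "X = T" using T ft'(1)[OF T(1)] unfolding t_def by simp
          then show ?thesis using T Ts by blast
        qed
      qed
      show "U \<inter> A \<subseteq> \<Union>((\<lambda>T. t T A) ` I)"
      proof
        fix p assume pUA: "p \<in> U \<inter> A"
        then obtain T where T: "T \<in> \<T>" "p \<in> T" using cov A by blast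
        have TI: "T \<in> I" unfolding I_def using T pUA by blast
        have Te: "T = tree (tm T) (tl T) (tn T)" using ft'(1)[OF T(1)] .
        have Ae: "A = strip (sa A) (sb A)" using fa'[OF A] .
        have "p \<in> t T A"
        proof (cases "sb A < tl T")
          case True
          have p1: "p \<in> strip (sa A) (sb A)" using pUA Ae by blast
          have p2: "p \<in> strip (tm T) (tl T)" using T(2) Te tree_sub_strip by blast
          have "strip (sa A) (sb A) \<subseteq> strip (tm T) (tl T)" using strip_inter_le[OF p1 p2] True by simp
          then have "dyad (sa A) (sb A) \<subseteq> dyad (tm T) (tl T)" by (simp add: strip_sub_iff)
          then have "tree (tm T) (tl T) (tn T) \<inter> strip (sa A) (sb A) \<subseteq> tree (sa A) (sb A) (Nidx (tn T) (tl T) (sb A))"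
            using tree_cut True by blast
          then show ?thesis using True T(2) Te p1 unfolding t_def by auto
        next
          case False
          then show ?thesis using T(2) Te unfolding t_def by simp
        qed
        then show "p \<in> \<Union>((\<lambda>T. t T A) ` I)" using TI by blast
      qed
    qed
    also have "\<dots> = (\<Sum>\<^sub>\<infinity>T\<in>\<T>. c T A)"
      by (rule infsum_cong_neutral) (auto simp: I_def c_def)
    finally show ?thesis .
  qed
  have claim2: "(\<Sum>A\<in>F. c T A) \<le> ennreal (tau T)" if T: "T \<in> \<T>" and F: "finite F" "F \<subseteq> \<D>" for T F
  proof -
    have Te: "T = tree (tm T) (tl T) (tn T)" using ft'(1)[OF T] .
    have "(\<Sum>A\<in>F. c T A) \<le> (\<Sum>A\<in>F. emeasure lborel (fst ` A \<inter> dyad (tm T) (tl T)))"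
    proof (rule sum_mono)
      fix A assume "A \<in> F"
      then have Ae: "A = strip (sa A) (sb A)" using fa' F by blast
      show "c T A \<le> emeasure lborel (fst ` A \<inter> dyad (tm T) (tl T))"
      proof (cases "T \<inter> A = {}")
        case True then show ?thesis unfolding c_def by simp
      next
        case False
        then have "tree (tm T) (tl T) (tn T) \<inter> strip (sa A) (sb A) \<noteq> {}" using Te Ae by simp
        from pair_bound[OF this] show ?thesis using False unfolding c_def t_def
          by (subst Ae) simp
      qed
    qed
    also have "\<dots> = (\<Sum>\<^sub>\<infinity>A\<in>F. emeasure lborel (fst ` A \<inter> dyad (tm T) (tl T)))" using F by simp
    also have "\<dots> \<le> emeasure lborel (dyad (tm T) (tl T))"
    proof (rule infsum_le_emeasure_disjoint)
      show "disjoint_family_on (\<lambda>A. fst ` A \<inter> dyad (tm T) (tl T)) F"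
        unfolding disjoint_family_on_def
      proof (intro ballI impI)
        fix E E' assume h: "E \<in> F" "E' \<in> F" "E \<noteq> E'"
        then have d: "E \<inter> E' = {}" using Dd F by (auto simp: pairwise_def disjnt_def)
        have ee: "E = strip (sa E) (sb E)" "E' = strip (sa E') (sb E')" using h F fa' by blast+
        then have "dyad (sa E) (sb E) \<inter> dyad (sa E') (sb E') = {}" using strip_disj_dyad d by metis
        then show "(fst ` E \<inter> dyad (tm T) (tl T)) \<inter> (fst ` E' \<inter> dyad (tm T) (tl T)) = {}"
          by (subst ee(1), subst ee(2)) auto
      qed
      fix A assume "A \<in> F"
      then have Ae: "A = strip (sa A) (sb A)" using fa' F by blast
      show "fst ` A \<inter> dyad (tm T) (tl T) \<in> sets lborel" by (subst Ae) simp
      show "fst ` A \<inter> dyad (tm T) (tl T) \<subseteq> dyad (tm T) (tl T)" by blast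
    qed (rule dyad_sets)
    also have "\<dots> = ennreal (tau T)" by (subst Te) (simp add: dyad_emeasure)
    finally show ?thesis .
  qed
  have "(\<Sum>\<^sub>\<infinity>A\<in>\<D>. nu L (U \<inter> A)) \<le> (\<Sum>\<^sub>\<infinity>A\<in>\<D>. \<Sum>\<^sub>\<infinity>T\<in>\<T>. c T A)"
    by (rule infsum_mono[OF summ summ]) (rule claim1)
  also have "\<dots> \<le> (\<Sum>\<^sub>\<infinity>T\<in>\<T>. ennreal (tau T))"
  proof (rule infsum_le_finite_sums[OF summ])
    fix F assume F: "finite F" "F \<subseteq> \<D>"
    have "(\<Sum>A\<in>F. \<Sum>\<^sub>\<infinity>T\<in>\<T>. c T A) = (\<Sum>\<^sub>\<infinity>T\<in>\<T>. \<Sum>A\<in>F. c T A)"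
      using sum_infsum_ennreal[OF F(1), of "\<lambda>A T. c T A" \<T>] by simp
    also have "\<dots> \<le> (\<Sum>\<^sub>\<infinity>T\<in>\<T>. ennreal (tau T))"
      by (rule infsum_mono[OF summ summ]) (rule claim2[OF _ F])
    finally show "(\<Sum>A\<in>F. \<Sum>\<^sub>\<infinity>T\<in>\<T>. c T A) \<le> (\<Sum>\<^sub>\<infinity>T\<in>\<T>. ennreal (tau T))" .
  qed
  finally show ?thesis .
qed

lemma carat:
  assumes Ds: "\<D> \<subseteq> strips L" and Dd: "disjoint \<D>" and K: "K \<ge> 1"
  shows "caratheodory (nu L) K \<D>"
  unfolding caratheodory_def
proof (intro conjI allI)
  show "disjoint \<D>" by fact
  fix U
  have "(\<Sum>\<^sub>\<infinity>A\<in>\<D>. nu L (U \<inter> A)) \<le> (INF S\<in>{S. S \<subseteq> trees L \<and> U \<inter> \<Union>\<D> \<subseteq> \<Union>S}. (\<Sum>\<^sub>\<infinity>X\<in>S. ennreal (tau X)))"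
    by (rule INF_greatest) (use carat_main[OF Ds Dd] in blast)
  also have "\<dots> = nu L (U \<inter> \<Union>\<D>)" by (simp add: nu_def outer_def)
  also have "\<dots> \<le> ennreal K * nu L (U \<inter> \<Union>\<D>)"
  proof -
    have "(1::ennreal) \<le> ennreal K" using K by simp
    then have "1 * nu L (U \<inter> \<Union>\<D>) \<le> ennreal K * nu L (U \<inter> \<Union>\<D>)" by (metis mult_right_mono zero_le)
    then show ?thesis by simp
  qed
  finally show "(\<Sum>\<^sub>\<infinity>A\<in>\<D>. nu L (U \<inter> A)) \<le> ennreal K * nu L (U \<inter> \<Union>\<D>)" .
qed



theorem lemma4p7:
  fixes L :: int and \<Phi> K :: real
  assumes "\<Phi> \<ge> 2" and "K \<ge> 1"
  shows "crop_condition (YL L) (strips L) (mu L) (nu L) (Cc L) \<Phi> K"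
  unfolding crop_condition_def covering_function_def
proof (intro conjI allI impI)
  fix A assume A: "A \<subseteq> YL L"
  show "Cc L A \<subseteq> strips L" unfolding Cc_def using Mc_sub Nc_sub by blast
  show "disjoint (Cc L A)" unfolding Cc_def by (rule Mc_disjoint[OF Nc_sub])
  show "A \<subseteq> \<Union>(Cc L A)" by (rule Cc_cover[OF A])
  have "(2::ennreal) \<le> ennreal \<Phi>" using assms(1) ennreal_leI[of 2 \<Phi>] by simp
  then have "2 * mu L A \<le> ennreal \<Phi> * mu L A" by (metis mult_right_mono zero_le)
  then show "mu L (\<Union>(Cc L A)) \<le> ennreal \<Phi> * mu L A" using mu_bound[OF A] by (rule order_trans[rotated])
next
  fix A A' :: "point set"
  assume "A \<subseteq> A' \<and> A' \<subseteq> YL L"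
  then show "\<Union>(Cc L A) \<subseteq> \<Union>(Cc L A')" using Cc_mono by blast
next
  fix \<A> assume As: "\<A> \<subseteq> strips L"
  show "\<exists>\<D>'\<subseteq>\<A>. caratheodory (nu L) K \<D>' \<and>
          (\<forall>F. F \<subseteq> YL L \<and> F \<inter> \<Union>\<D>' = {} \<longrightarrow> \<Union>(Cc L F) = \<Union>(Cc L F - \<A>))"
  proof (intro exI[of _ "Mc \<A>"] conjI allI impI)
    show "Mc \<A> \<subseteq> \<A>" by (rule Mc_sub)
    show "caratheodory (nu L) K (Mc \<A>)"
      by (rule carat[OF _ Mc_disjoint[OF As] assms(2)]) (use Mc_sub As in blast)
    fix F assume "F \<subseteq> YL L \<and> F \<inter> \<Union>(Mc \<A>) = {}"
    then have "Cc L F \<inter> \<A> = {}" using crop_F[OF As] by blast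
    then show "\<Union>(Cc L F) = \<Union>(Cc L F - \<A>)" by (simp add: Diff_triv)
  qed
qed

end
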